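(* Let $M$ be an atomic Puiseux monoid. (1) If $M$ is weak reciprocal, then $|\mathsf{L}_M(1)| = \infty$; in particular, $M$ is not a BFM. (2) If $M$ is reciprocal and $q \in M$ is nonzero, then $|\mathsf{L}_M(q)| \in \{1, \infty\}$; more precisely, $|\mathsf{L}_M(q)| = \infty$ if $1 \mid_M q$, and $|\mathsf{L}_M(q)| = 1$ if $1 \nmid_M q$.
   Context: A Puiseux monoid is an additive submonoid of $(\mathbb{Q}_{\ge 0},+)$. A weak reciprocal Puiseux monoid is one of the form $\langle \frac{1}{d_n} \mid n \in \mathbb{N}\rangle$ for a strictly increasing sequence $(d_n)_{n\ge1}$ of positive integers; it is reciprocal if moreover the $d_n$ are pairwise relatively prime. For $x,y \in M$, $x \mid_M y$ means $y = x + z$ for some $z \in M$. An atom of $M$ is a nonzero element $a$ such that $a=x+y$ with $x,y\in M$ forces $x=0$ or $y=0$; $\mathcal{A}(M)$ is the set of atoms, and $M$ is atomic if each element is a finite sum of atoms. For nonzero $x \in M$, a factorization of $x$ is a formal sum $z = a_1 + \dots + a_\ell$ (unordered, i.e., an element of the free commutative monoid on $\mathcal{A}(M)$) of atoms whose value in $M$ is $x$; its length is $|z| = \ell$; $\mathsf{Z}_M(x)$ is the set of factorizations of $x$ and $\mathsf{L}_M(x) = \{|z| \mid z \in \mathsf{Z}_M(x)\}$ its set of lengths. $M$ is a bounded factorization monoid (BFM) if it is atomic and $\mathsf{L}_M(x)$ is finite for every nonzero $x \in M$. *)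

theory Defs
  imports Complex_Main "HOL-Library.Multiset"
begin

definition puiseux_monoid :: "rat set \<Rightarrow> bool" where
  "puiseux_monoid M \<longleftrightarrow> 0 \<in> M \<and> (\<forall>x\<in>M. \<forall>y\<in>M. x + y \<in> M) \<and> (\<forall>x\<in>M. 0 \<le> x)"

inductive_set monoid_gen :: "rat set \<Rightarrow> rat set" for S :: "rat set" where
  zero: "0 \<in> monoid_gen S"
| gen: "s \<in> S \<Longrightarrow> s \<in> monoid_gen S"
| add: "x \<in> monoid_gen S \<Longrightarrow> y \<in> monoid_gen S \<Longrightarrow> x + y \<in> monoid_gen S"

text \<open>Weak reciprocal: generated by reciprocals 1/d_n of a strictly increasing
  sequence of positive integers (indexed from 0 here instead of 1).\<close>
definition weak_reciprocal_seq :: "rat set \<Rightarrow> (nat \<Rightarrow> nat) \<Rightarrow> bool" where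
  "weak_reciprocal_seq M d \<longleftrightarrow> strict_mono d \<and> (\<forall>n. 0 < d n) \<and>
     M = monoid_gen (range (\<lambda>n. 1 / of_nat (d n)))"

definition weak_reciprocal :: "rat set \<Rightarrow> bool" where
  "weak_reciprocal M \<longleftrightarrow> (\<exists>d. weak_reciprocal_seq M d)"

definition reciprocal :: "rat set \<Rightarrow> bool" where
  "reciprocal M \<longleftrightarrow> (\<exists>d. weak_reciprocal_seq M d \<and>
     (\<forall>m n. m \<noteq> n \<longrightarrow> coprime (d m) (d n)))"

definition divides_in :: "rat set \<Rightarrow> rat \<Rightarrow> rat \<Rightarrow> bool" where
  "divides_in M x y \<longleftrightarrow> (\<exists>z\<in>M. y = x + z)"

definition atoms :: "rat set \<Rightarrow> rat set" where
  "atoms M = {a \<in> M. a \<noteq> 0 \<and> (\<forall>x\<in>M. \<forall>y\<in>M. a = x + y \<longrightarrow> x = 0 \<or> y = 0)}"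

definition factorizations :: "rat set \<Rightarrow> rat \<Rightarrow> rat multiset set" where
  "factorizations M x = {z. set_mset z \<subseteq> atoms M \<and> sum_mset z = x}"

definition lengths :: "rat set \<Rightarrow> rat \<Rightarrow> nat set" where
  "lengths M x = size ` factorizations M x"

definition atomic :: "rat set \<Rightarrow> bool" where
  "atomic M \<longleftrightarrow> (\<forall>x\<in>M. x \<noteq> 0 \<longrightarrow> factorizations M x \<noteq> {})"

definition BFM :: "rat set \<Rightarrow> bool" where
  "BFM M \<longleftrightarrow> atomic M \<and> (\<forall>x\<in>M. x \<noteq> 0 \<longrightarrow> finite (lengths M x))"

end

theory Submission imports Defs begin

definition kint :: "int \<Rightarrow> rat \<Rightarrow> bool" where
  "kint D r \<longleftrightarrow> (\<exists>a b. b \<noteq> 0 \<and> coprime b D \<and> r = of_int a / of_int b)"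

lemma kint_add: assumes "kint D x" "kint D y" shows "kint D (x + y)"
proof -
  from assms obtain a b a' b' where h: "b \<noteq> 0" "coprime b D" "x = of_int a / of_int b"
    "b' \<noteq> 0" "coprime b' D" "y = of_int a' / of_int b'" unfolding kint_def by blast
  have "x + y = of_int (a*b' + a'*b) / of_int (b*b')" using h by (simp add: field_simps)
  moreover have "coprime (b*b') D" using h by simp
  moreover have "b*b' \<noteq> 0" using h by simp
  ultimately show ?thesis unfolding kint_def by blast
qed

lemma kint_uminus: assumes "kint D x" shows "kint D (- x)"
proof -
  from assms obtain a b where h: "b \<noteq> 0" "coprime b D" "x = of_int a / of_int b"
    unfolding kint_def by blast
  have "- x = of_int (-a) / of_int b" using h by simp
  thus ?thesis using h unfolding kint_def by blast
qed

lemma kint_sum_mset: "(\<forall>x\<in>set_mset z. kint D x) \<Longrightarrow> kint D (sum_mset z)"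
proof (induction z)
  case empty
  then show ?case unfolding kint_def by (rule_tac x=0 in exI, rule_tac x=1 in exI) simp
next
  case (add x z)
  then show ?case by (simp add: kint_add)
qed

lemma kint_dvd: assumes "D \<noteq> 0" "kint D (of_int n / of_int D)" shows "D dvd n"
proof -
  from assms obtain a b where h: "b \<noteq> 0" "coprime b D" "of_int n / of_int D = (of_int a / of_int b :: rat)"
    unfolding kint_def by blast
  hence "(of_int (n*b) :: rat) = of_int (a*D)" using assms(1) by (simp add: field_simps)
  hence "n*b = a*D" by (simp only: of_int_eq_iff)
  hence "D dvd n*b" by simp
  thus ?thesis using h(2) by (simp add: coprime_commute coprime_dvd_mult_left_iff)
qed

lemma atoms_gen: assumes "a \<in> atoms (monoid_gen S)" shows "a \<in> S"
proof -
  have "x \<in> monoid_gen S \<Longrightarrow> x \<in> atoms (monoid_gen S) \<Longrightarrow> x \<in> S" for x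
  proof (induction x rule: monoid_gen.induct)
    case zero
    then show ?case by (simp add: atoms_def)
  next
    case (gen s)
    then show ?case by simp
  next
    case (add x y)
    then have "x = 0 \<or> y = 0" unfolding atoms_def by blast
    then show ?case using add by auto
  qed
  thus ?thesis using assms by (simp add: atoms_def)
qed

lemma sum_mset_in: assumes "puiseux_monoid M" "set_mset z \<subseteq> M" shows "sum_mset z \<in> M"
  using assms(2)
proof (induction z)
  case empty
  then show ?case using assms(1) by (simp add: puiseux_monoid_def)
next
  case (add x z)
  then show ?case using assms(1) by (simp add: puiseux_monoid_def)
qed

lemma atoms_sub: "atoms M \<subseteq> M" by (auto simp: atoms_def)

lemma fact_in: "puiseux_monoid M \<Longrightarrow> z \<in> factorizations M q \<Longrightarrow> q \<in> M"
  unfolding factorizations_def using sum_mset_in atoms_sub by blast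

lemma wr_atom: assumes "weak_reciprocal_seq M d" "a \<in> atoms M"
  shows "\<exists>k. a = 1 / of_nat (d k)"
  using assms atoms_gen unfolding weak_reciprocal_seq_def by blast

lemma int_mult_sum: assumes "set_mset z \<subseteq> S" "\<forall>a\<in>S. a * L \<in> \<int>"
  shows "sum_mset z * L \<in> \<int>"
  using assms(1)
proof (induction z)
  case empty
  then show ?case by simp
next
  case (add x z)
  then have "x * L \<in> \<int>" "sum_mset z * L \<in> \<int>" using assms(2) by auto
  then show ?case by (simp add: distrib_right)
qed

lemma sm_gt: assumes "strict_mono (d::nat\<Rightarrow>nat)" "\<forall>n. d n > 0" shows "d n > n"
proof (induction n)
  case 0
  then show ?case using assms by simp
next
  case (Suc n)
  have "d (Suc n) > d n" using assms(1) by (simp add: strict_mono_def)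
  then show ?case using Suc by simp
qed

lemma wr_atoms_infinite:
  assumes wr: "weak_reciprocal_seq M d" and pm: "puiseux_monoid M" and at: "atomic M"
  shows "infinite (atoms M)"
proof
  assume fin: "finite (atoms M)"
  define f where "f a = (SOME n::nat. n > 0 \<and> a = 1 / of_nat n)" for a :: rat
  have fa: "f a > 0 \<and> a = 1 / of_nat (f a)" if aa: "a \<in> atoms M" for a
  proof -
    obtain k where "a = 1 / of_nat (d k)" using wr_atom[OF wr aa] by blast
    moreover have "d k > 0" using wr unfolding weak_reciprocal_seq_def by blast
    ultimately have "\<exists>n::nat. n > 0 \<and> a = 1 / of_nat n" by blast
    thus ?thesis unfolding f_def by (rule someI_ex)
  qed
  define L where "L = (\<Prod>a\<in>atoms M. f a)"
  have Lpos: "L > 0" unfolding L_def using fa by (simp add: prod_pos)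
  have ai: "\<forall>a\<in>atoms M. a * of_nat L \<in> \<int>"
  proof
    fix a assume a: "a \<in> atoms M"
    have "f a dvd L" unfolding L_def using fin a by (rule dvd_prodI)
    then obtain c where c: "L = f a * c" by blast
    have fa0: "(of_nat (f a) :: rat) \<noteq> 0" using fa[OF a] by simp
    have "a * of_nat L = (1 / of_nat (f a)) * (of_nat (f a) * of_nat c)"
      using fa[OF a] c by (metis of_nat_mult)
    also have "\<dots> = of_nat c" using fa0 by simp
    finally show "a * of_nat L \<in> \<int>" by simp
  qed
  have sm: "strict_mono d" and dpos: "\<forall>n. d n > 0"
    and Meq: "M = monoid_gen (range (\<lambda>n. 1 / of_nat (d n)))"
    using wr unfolding weak_reciprocal_seq_def by auto
  define x where "x = 1 / (of_nat (d L) :: rat)"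
  have "x \<in> M" unfolding x_def Meq by (rule monoid_gen.gen) simp
  moreover have "x \<noteq> 0" unfolding x_def using dpos by simp
  ultimately obtain z where z: "z \<in> factorizations M x" using at unfolding atomic_def by blast
  have "x * of_nat L \<in> \<int>" using z int_mult_sum[of z "atoms M" "of_nat L"] ai
    unfolding factorizations_def by auto
  then obtain k where k: "x * of_nat L = of_int k" by (auto elim: Ints_cases)
  have lt: "L < d L" using sm_gt[OF sm dpos] .
  have "0 < x * of_nat L" unfolding x_def using Lpos dpos by simp
  moreover have "x * of_nat L < 1" unfolding x_def using lt dpos
    by (simp add: field_simps)
  ultimately have "0 < k" "k < 1" using k by (metis of_int_0_less_iff, metis of_int_less_1_iff)
  thus False by simp
qed

lemma wr_inf_lengths:
  assumes wr: "weak_reciprocal_seq M d" and pm: "puiseux_monoid M" and at: "atomic M"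
    and w: "w \<in> factorizations M r"
  shows "infinite (lengths M (r + 1))"
proof
  assume fin: "finite (lengths M (r + 1))"
  define f where "f a = (SOME n::nat. n > 0 \<and> a = 1 / of_nat n)" for a :: rat
  have fa: "f a > 0 \<and> a = 1 / of_nat (f a)" if aa: "a \<in> atoms M" for a
  proof -
    obtain k where "a = 1 / of_nat (d k)" using wr_atom[OF wr aa] by blast
    moreover have "d k > 0" using wr unfolding weak_reciprocal_seq_def by blast
    ultimately have "\<exists>n::nat. n > 0 \<and> a = 1 / of_nat n" by blast
    thus ?thesis unfolding f_def by (rule someI_ex)
  qed
  have "(\<lambda>a. size w + f a) ` atoms M \<subseteq> lengths M (r + 1)"
  proof
    fix l assume "l \<in> (\<lambda>a. size w + f a) ` atoms M"
    then obtain a where a: "a \<in> atoms M" "l = size w + f a" by blast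
    let ?z = "w + replicate_mset (f a) a"
    have "set_mset ?z \<subseteq> atoms M" using w a unfolding factorizations_def by auto
    moreover have "sum_mset ?z = r + 1" using w fa[OF a(1)]
      unfolding factorizations_def
      by (simp add: sum_mset_replicate_mset) (metis less_numeral_extra(3) nonzero_mult_div_cancel_left of_nat_0_less_iff times_divide_eq_right)
    ultimately have "?z \<in> factorizations M (r + 1)" unfolding factorizations_def by blast
    moreover have "size ?z = l" using a by simp
    ultimately show "l \<in> lengths M (r + 1)" unfolding lengths_def by (metis image_eqI)
  qed
  hence "finite ((\<lambda>a. size w + f a) ` atoms M)" using fin finite_subset by blast
  moreover have "inj_on (\<lambda>a. size w + f a) (atoms M)"
  proof (rule inj_onI)
    fix a b assume "a \<in> atoms M" "b \<in> atoms M" "size w + f a = size w + f b"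
    thus "a = b" using fa by (metis add_left_cancel)
  qed
  ultimately have "finite (atoms M)" using finite_imageD by blast
  thus False using wr_atoms_infinite[OF wr pm at] by blast
qed


lemma big_count_div:
  assumes pm: "puiseux_monoid M" and z: "z \<in> factorizations M q" and a: "a \<in> atoms M"
    and n: "a = 1 / of_nat n" "n > 0" "n \<le> count z a"
  shows "divides_in M 1 q"
proof -
  have sub: "replicate_mset n a \<subseteq># z" using n(3) by (simp only: count_le_replicate_mset_subset_eq)
  define r where "r = z - replicate_mset n a"
  have zr: "z = replicate_mset n a + r" unfolding r_def using sub
    by (rule subset_mset.add_diff_inverse[symmetric])
  have "set_mset r \<subseteq> set_mset z" 
  proof
    fix x assume "x \<in># r" thus "x \<in># z" unfolding r_def by (rule in_diffD)
  qed
  hence "set_mset r \<subseteq> atoms M" using z unfolding factorizations_def by blast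
  hence "sum_mset r \<in> M" using sum_mset_in[OF pm] atoms_sub by blast
  moreover have "q = 1 + sum_mset r"
  proof -
    have "q = sum_mset z" using z unfolding factorizations_def by simp
    also have "\<dots> = of_nat n * a + sum_mset r" by (subst zr) (simp add: sum_mset_replicate_mset)
    also have "of_nat n * a = 1" using n(1,2) by simp
    finally show ?thesis .
  qed
  ultimately show ?thesis unfolding divides_in_def by blast
qed

lemma congr:
  assumes wr: "weak_reciprocal_seq M d" and cop: "\<forall>m n. m \<noteq> n \<longrightarrow> coprime (d m) (d n)"
    and z: "z \<in> factorizations M q" and w: "w \<in> factorizations M q"
    and a: "a \<in> atoms M" "a = 1 / of_nat (d k)"
  shows "int (d k) dvd int (count z a) - int (count w a)"
proof -
  let ?D = "int (d k)"
  have dpos: "\<forall>n. d n > 0" using wr unfolding weak_reciprocal_seq_def by auto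
  have inj: "inj d" using wr unfolding weak_reciprocal_seq_def by (simp add: strict_mono_imp_inj_on)
  have decomp: "sum_mset u = of_nat (count u a) * a + sum_mset (filter_mset (\<lambda>x. x \<noteq> a) u)" for u
  proof -
    have "sum_mset u = sum_mset (filter_mset (\<lambda>x. x = a) u) + sum_mset (filter_mset (\<lambda>x. \<not> x = a) u)"
      by (metis multiset_partition sum_mset.union)
    thus ?thesis by (simp add: filter_eq_replicate_mset sum_mset_replicate_mset)
  qed
  have kk: "kint ?D (sum_mset (filter_mset (\<lambda>x. x \<noteq> a) u))" if u: "u \<in> factorizations M q" for u
  proof (rule kint_sum_mset, rule ballI)
    fix x assume "x \<in> set_mset (filter_mset (\<lambda>x. x \<noteq> a) u)"
    hence x: "x \<in> atoms M" "x \<noteq> a" using u unfolding factorizations_def by auto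
    obtain j where j: "x = 1 / of_nat (d j)" using wr_atom[OF wr x(1)] by blast
    have "j \<noteq> k" using x(2) j a(2) by auto
    hence "coprime (d j) (d k)" using cop by blast
    hence "coprime (int (d j)) ?D" by simp
    moreover have "int (d j) \<noteq> 0" using dpos by (metis of_nat_0_less_iff less_irrefl)
    moreover have "x = of_int 1 / of_int (int (d j))" using j by simp
    ultimately show "kint ?D x" unfolding kint_def by blast
  qed
  let ?yz = "sum_mset (filter_mset (\<lambda>x. x \<noteq> a) z)"
  let ?yw = "sum_mset (filter_mset (\<lambda>x. x \<noteq> a) w)"
  have "sum_mset z = sum_mset w" using z w unfolding factorizations_def by simp
  hence eq: "of_nat (count z a) * a + ?yz = of_nat (count w a) * a + ?yw" using decomp by metis
  have "of_int (int (count z a) - int (count w a)) / of_int ?D = ?yw + - ?yz"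
  proof -
    have "of_int (int (count z a) - int (count w a)) / of_int ?D
        = of_nat (count z a) * a - of_nat (count w a) * a"
    proof -
      have g: "(of_int (int x - int y) / of_int (int D) :: rat) = of_nat x * (1 / of_nat D) - of_nat y * (1 / of_nat D)"
        for x y D :: nat by (simp add: diff_divide_distrib)
      show ?thesis unfolding a(2) by (rule g)
    qed
    also have "\<dots> = ?yw + - ?yz" using eq by (simp add: algebra_simps)
    finally show ?thesis .
  qed
  moreover have "kint ?D (?yw + - ?yz)" using kk[OF w] kk[OF z] by (rule kint_add[OF _ kint_uminus])
  ultimately have "kint ?D (of_int (int (count z a) - int (count w a)) / of_int ?D)" by simp
  moreover have "?D \<noteq> 0" using dpos by (metis of_nat_0_less_iff less_irrefl)
  ultimately show ?thesis using kint_dvd by blast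
qed

lemma unique_fact:
  assumes wr: "weak_reciprocal_seq M d" and cop: "\<forall>m n. m \<noteq> n \<longrightarrow> coprime (d m) (d n)"
    and pm: "puiseux_monoid M"
    and z: "z \<in> factorizations M q" and w: "w \<in> factorizations M q"
    and nd: "\<not> divides_in M 1 q"
  shows "z = w"
proof (rule multiset_eqI)
  fix a
  show "count z a = count w a"
  proof (cases "a \<in> atoms M")
    case False
    then have "a \<notin># z" "a \<notin># w" using z w unfolding factorizations_def by auto
    then show ?thesis by (simp add: not_in_iff)
  next
    case True
    obtain k where k: "a = 1 / of_nat (d k)" using wr_atom[OF wr True] by blast
    have dk: "d k > 0" using wr unfolding weak_reciprocal_seq_def by auto
    have "count z a < d k" using big_count_div[OF pm z True k dk] nd by (meson not_le)
    moreover have "count w a < d k" using big_count_div[OF pm w True k dk] nd by (meson not_le)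
    moreover have "int (d k) dvd int (count z a) - int (count w a)"
      using congr[OF wr cop z w True k] .
    ultimately have "int (count z a) - int (count w a) = 0"
      using dvd_imp_le_int[of "int (count z a) - int (count w a)" "int (d k)"] by fastforce
    thus ?thesis by simp
  qed
qed


theorem proposition4p8:
  fixes M :: "rat set"
  assumes "puiseux_monoid M" and "atomic M"
  shows "(weak_reciprocal M \<longrightarrow> infinite (lengths M 1) \<and> \<not> BFM M) \<and>
         (reciprocal M \<longrightarrow> (\<forall>q\<in>M. q \<noteq> 0 \<longrightarrow>
             (infinite (lengths M q) \<or> card (lengths M q) = 1) \<and>
             (divides_in M 1 q \<longrightarrow> infinite (lengths M q)) \<and>
             (\<not> divides_in M 1 q \<longrightarrow> card (lengths M q) = 1)))"
proof -
  have empt: "{#} \<in> factorizations M 0" unfolding factorizations_def by simp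
  have P1: "infinite (lengths M 1) \<and> \<not> BFM M" if wr: "weak_reciprocal_seq M d" for d
  proof -
    have inf: "infinite (lengths M 1)" using wr_inf_lengths[OF wr assms empt] by simp
    obtain z where "z \<in> factorizations M 1"
      using inf unfolding lengths_def by fastforce
    hence "1 \<in> M" using fact_in[OF assms(1)] by blast
    moreover have "(1::rat) \<noteq> 0" by simp
    ultimately show ?thesis using inf unfolding BFM_def by blast
  qed
  have P2: "(divides_in M 1 q \<longrightarrow> infinite (lengths M q)) \<and>
             (\<not> divides_in M 1 q \<longrightarrow> card (lengths M q) = 1)"
    if wr: "weak_reciprocal_seq M d" and cop: "\<forall>m n. m \<noteq> n \<longrightarrow> coprime (d m) (d n)"
      and q: "q \<in> M" "q \<noteq> 0" for d q
  proof (intro conjI impI)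
    assume "divides_in M 1 q"
    then obtain r where r: "r \<in> M" "q = 1 + r" unfolding divides_in_def by blast
    obtain w where w: "w \<in> factorizations M r"
    proof (cases "r = 0")
      case True
      then show ?thesis using that empt by simp
    next
      case False
      then show ?thesis using that r(1) assms(2) unfolding atomic_def by blast
    qed
    show "infinite (lengths M q)" using wr_inf_lengths[OF wr assms w] r(2) by (simp add: add.commute)
  next
    assume nd: "\<not> divides_in M 1 q"
    obtain z where z: "z \<in> factorizations M q" using q assms(2) unfolding atomic_def by blast
    have "factorizations M q = {z}" using unique_fact[OF wr cop assms(1) _ z nd] z by blast
    thus "card (lengths M q) = 1" unfolding lengths_def by simp
  qed
  show ?thesis
  proof (rule conjI)
    show "weak_reciprocal M \<longrightarrow> infinite (lengths M 1) \<and> \<not> BFM M"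
      using P1 unfolding weak_reciprocal_def by blast
  next
    show "reciprocal M \<longrightarrow> (\<forall>q\<in>M. q \<noteq> 0 \<longrightarrow>
             (infinite (lengths M q) \<or> card (lengths M q) = 1) \<and>
             (divides_in M 1 q \<longrightarrow> infinite (lengths M q)) \<and>
             (\<not> divides_in M 1 q \<longrightarrow> card (lengths M q) = 1))"
    proof (intro impI ballI)
      fix q assume rc: "reciprocal M" and q: "q \<in> M" "q \<noteq> 0"
      from rc obtain d where d: "weak_reciprocal_seq M d" "\<forall>m n. m \<noteq> n \<longrightarrow> coprime (d m) (d n)"
        unfolding reciprocal_def by blast
      from P2[OF d q] show "(infinite (lengths M q) \<or> card (lengths M q) = 1) \<and>
             (divides_in M 1 q \<longrightarrow> infinite (lengths M q)) \<and>
             (\<not> divides_in M 1 q \<longrightarrow> card (lengths M q) = 1)" by blast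
    qed
  qed
qed

end
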